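(* Let $q\ge 2$. There is no $u\in C^{6}(\mathbb{R}^{4})$ with $u>0$ solving $\Delta^{3}u=u^{-q}$ in $\mathbb{R}^{4}$ and satisfying $u(x)=o(|x|^{4})$ as $|x|\to+\infty$. *)

theory Defs
  imports "HOL-Analysis.Analysis" "HOL-Library.Landau_Symbols"
begin

definition partial :: "'n::finite \<Rightarrow> (real^'n \<Rightarrow> real) \<Rightarrow> real^'n \<Rightarrow> real" where
  "partial i f x = deriv (\<lambda>t. f (x + t *\<^sub>R axis i 1)) 0"

fun Ck :: "nat \<Rightarrow> (real^'n::finite \<Rightarrow> real) \<Rightarrow> bool" where
  "Ck 0 f = continuous_on UNIV f"
| "Ck (Suc k) f = (continuous_on UNIV f \<and> (\<forall>x. f differentiable (at x))
                    \<and> (\<forall>i. Ck k (partial i f)))"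

definition laplacian :: "(real^'n::finite \<Rightarrow> real) \<Rightarrow> real^'n \<Rightarrow> real" where
  "laplacian f x = (\<Sum>i\<in>UNIV. partial i (partial i f) x)"

end

theory Submission
  imports Defs
begin


abbreviation ee :: "'n::finite \<Rightarrow> real^'n" where "ee i \<equiv> axis i 1"

lemma line_has_deriv0:
  fixes f :: "real^'n::finite \<Rightarrow> real"
  assumes "f differentiable (at y)"
  shows "((\<lambda>t. f (y + t *\<^sub>R ee i)) has_real_derivative partial i f y) (at 0)"
proof -
  have "(\<lambda>t. f (y + t *\<^sub>R ee i)) differentiable (at 0)"
  proof -
    have "(\<lambda>t::real. y + t *\<^sub>R ee i) differentiable (at 0)" by (intro derivative_intros)
    moreover have "f differentiable (at ((\<lambda>t::real. y + t *\<^sub>R ee i) 0))" using assms by simp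
    ultimately show ?thesis using differentiable_chain_at[of "\<lambda>t::real. y + t *\<^sub>R ee i" 0 f]
      by (simp add: o_def)
  qed
  then show ?thesis unfolding partial_def
    using DERIV_deriv_iff_real_differentiable by blast
qed

lemma line_has_deriv:
  fixes f :: "real^'n::finite \<Rightarrow> real"
  assumes "\<And>y. f differentiable (at y)"
  shows "((\<lambda>t. f (x + t *\<^sub>R ee i)) has_real_derivative partial i f (x + s *\<^sub>R ee i)) (at s)"
proof -
  have "((\<lambda>t. f ((x + s *\<^sub>R ee i) + t *\<^sub>R ee i)) has_real_derivative partial i f (x + s *\<^sub>R ee i)) (at 0)"
    by (rule line_has_deriv0[OF assms])
  then have "((\<lambda>t. f (x + (t + s) *\<^sub>R ee i)) has_real_derivative partial i f (x + s *\<^sub>R ee i)) (at 0)"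
    by (simp add: algebra_simps scaleR_add_left)
  then show ?thesis using DERIV_shift[of "\<lambda>t. f (x + t *\<^sub>R ee i)" _ 0 s] by simp
qed

lemma Ck_cont: "Ck k f \<Longrightarrow> continuous_on UNIV f"
  by (cases k) auto

lemma Ck_Suc_mono: "Ck (Suc k) f \<Longrightarrow> Ck k f"
proof (induction k arbitrary: f)
  case 0 then show ?case by simp
next
  case (Suc k) then show ?case by (metis Ck.simps(2))
qed


lemma partial_add:
  fixes f g :: "real^'n::finite \<Rightarrow> real"
  assumes "f differentiable (at x)" "g differentiable (at x)"
  shows "partial i (\<lambda>x. f x + g x) x = partial i f x + partial i g x"
proof -
  have "((\<lambda>t. f (x + t *\<^sub>R ee i) + g (x + t *\<^sub>R ee i)) has_real_derivative partial i f x + partial i g x) (at 0)"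
    using line_has_deriv0[OF assms(1)] line_has_deriv0[OF assms(2)] by (intro derivative_intros)
  then show ?thesis unfolding partial_def using DERIV_imp_deriv by blast
qed

lemma partial_zero: "partial i (\<lambda>x. 0) x = 0"
  unfolding partial_def by simp

lemma Ck_add: "Ck k f \<Longrightarrow> Ck k g \<Longrightarrow> Ck k (\<lambda>x. f x + g x)"
proof (induction k arbitrary: f g)
  case 0 then show ?case by (auto intro: continuous_on_add)
next
  case (Suc k)
  have eq: "partial i (\<lambda>x. f x + g x) = (\<lambda>x. partial i f x + partial i g x)" for i
    using Suc.prems by (auto intro!: ext partial_add)
  show ?case using Suc by (auto simp: eq intro: continuous_on_add)
qed

lemma Ck_zero: "Ck k (\<lambda>x. 0)"
proof (induction k)
  case 0 then show ?case by simp
next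
  case (Suc k)
  have "partial i (\<lambda>x::real^'a. 0::real) = (\<lambda>x. 0)" for i by (auto simp: partial_zero)
  then show ?case using Suc by simp
qed

lemma Ck_sum: "finite I \<Longrightarrow> (\<And>i. i \<in> I \<Longrightarrow> Ck k (F i)) \<Longrightarrow> Ck k (\<lambda>x. \<Sum>i\<in>I. F i x)"
  by (induction I rule: finite_induct) (auto intro: Ck_add Ck_zero)

lemma Ck_partial: "Ck (Suc k) f \<Longrightarrow> Ck k (partial i f)" by simp

lemma laplacian_eq: "laplacian f = (\<lambda>x. \<Sum>i\<in>UNIV. partial i (partial i f) x)"
  by (rule ext) (simp add: laplacian_def)

lemma Ck_laplacian: "Ck (Suc (Suc k)) f \<Longrightarrow> Ck k (laplacian f)"
  unfolding laplacian_eq by (intro Ck_sum) auto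


definition LC2 :: "(real^4 \<Rightarrow> real) \<Rightarrow> (4 \<Rightarrow> real^4 \<Rightarrow> real) \<Rightarrow> (4 \<Rightarrow> real^4 \<Rightarrow> real) \<Rightarrow> bool" where
"LC2 f f1 f2 \<longleftrightarrow> (\<forall>i x s. ((\<lambda>t. f (x + t *\<^sub>R ee i)) has_real_derivative f1 i (x + s *\<^sub>R ee i)) (at s)
    \<and> ((\<lambda>t. f1 i (x + t *\<^sub>R ee i)) has_real_derivative f2 i (x + s *\<^sub>R ee i)) (at s))
    \<and> (\<forall>i. continuous_on UNIV (f2 i))"

lemma Ck2_LC2: "Ck 2 v \<Longrightarrow> LC2 v (\<lambda>i. partial i v) (\<lambda>i. partial i (partial i v))"
  unfolding LC2_def numeral_2_eq_2
  by (auto intro!: line_has_deriv dest: Ck_cont)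

lemma fd_one:
  assumes "LC2 f f1 f2" "\<epsilon> > 0"
  shows "\<exists>\<delta>>0. \<forall>h x. 0 < \<bar>h\<bar> \<and> \<bar>h\<bar> < \<delta> \<and> norm x \<le> r \<longrightarrow>
     \<bar>(f (x + h *\<^sub>R ee i) + f (x - h *\<^sub>R ee i) - 2 * f x) / h\<^sup>2 - f2 i x\<bar> \<le> \<epsilon>"
proof -
  have d1: "((\<lambda>t. f (x + t *\<^sub>R ee i)) has_real_derivative f1 i (x + s *\<^sub>R ee i)) (at s)"
    and d2: "((\<lambda>t. f1 i (x + t *\<^sub>R ee i)) has_real_derivative f2 i (x + s *\<^sub>R ee i)) (at s)"
    and c2: "continuous_on UNIV (f2 i)" for x s
    using assms(1) unfolding LC2_def by blast+
  have "uniformly_continuous_on (cball 0 (r+1)) (f2 i)"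
    by (rule compact_uniformly_continuous) (auto intro: continuous_on_subset[OF c2])
  then obtain d where d: "d > 0" and
    dd: "\<And>x y. x \<in> cball 0 (r+1) \<Longrightarrow> y \<in> cball 0 (r+1) \<Longrightarrow> dist y x < d \<Longrightarrow> dist (f2 i y) (f2 i x) < \<epsilon>"
    unfolding uniformly_continuous_on_def using assms(2) by metis
  have ne: "norm (ee i :: real^4) = 1" by simp
  show ?thesis
  proof (intro exI[of _ "min d 1"] conjI allI impI)
    show "0 < min d 1" using d by simp
    fix h :: real and x :: "real^4" assume hx: "0 < \<bar>h\<bar> \<and> \<bar>h\<bar> < min d 1 \<and> norm x \<le> r"
    define k where "k = (\<lambda>t. f (x + t *\<^sub>R ee i) + f (x - t *\<^sub>R ee i) - 2 * f x)"
    define k1 where "k1 = (\<lambda>t. f1 i (x + t *\<^sub>R ee i) - f1 i (x - t *\<^sub>R ee i))"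
    define k2 where "k2 = (\<lambda>t. f2 i (x + t *\<^sub>R ee i) + f2 i (x - t *\<^sub>R ee i))"
    have m1: "((\<lambda>t. f (x - t *\<^sub>R ee i)) has_real_derivative - f1 i (x - s *\<^sub>R ee i)) (at s)" for s
    proof -
      have "((\<lambda>t. f (x + t *\<^sub>R ee i)) has_real_derivative f1 i (x + (- s) *\<^sub>R ee i)) (at (- s))" by (rule d1)
      then have "((\<lambda>t. f (x + (- t) *\<^sub>R ee i)) has_real_derivative - f1 i (x + (- s) *\<^sub>R ee i)) (at s)"
        using DERIV_mirror[of "\<lambda>t. f (x + t *\<^sub>R ee i)" "f1 i (x + (- s) *\<^sub>R ee i)" s] by simp
      then show ?thesis by simp
    qed
    have m2: "((\<lambda>t. f1 i (x - t *\<^sub>R ee i)) has_real_derivative - f2 i (x - s *\<^sub>R ee i)) (at s)" for s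
    proof -
      have "((\<lambda>t. f1 i (x + t *\<^sub>R ee i)) has_real_derivative f2 i (x + (- s) *\<^sub>R ee i)) (at (- s))" by (rule d2)
      then have "((\<lambda>t. f1 i (x + (- t) *\<^sub>R ee i)) has_real_derivative - f2 i (x + (- s) *\<^sub>R ee i)) (at s)"
        using DERIV_mirror[of "\<lambda>t. f1 i (x + t *\<^sub>R ee i)" "f2 i (x + (- s) *\<^sub>R ee i)" s] by simp
      then show ?thesis by simp
    qed
    define D where "D = (\<lambda>m::nat. if m = 0 then k else if m = 1 then k1 else k2)"
    have "\<exists>t. \<bar>t\<bar> \<le> \<bar>h\<bar> \<and> k h = (\<Sum>m<2. D m 0 / (fact m) * h ^ m) + D 2 t / (fact 2) * h ^ 2"
    proof (rule Maclaurin_bi_le)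
      show "D 0 = k" by (simp add: D_def)
      show "\<forall>m t. m < 2 \<and> \<bar>t\<bar> \<le> \<bar>h\<bar> \<longrightarrow> DERIV (D m) t :> D (Suc m) t"
      proof (intro allI impI)
        fix m :: nat and t :: real assume "m < 2 \<and> \<bar>t\<bar> \<le> \<bar>h\<bar>"
        then have "m = 0 \<or> m = 1" by auto
        then show "DERIV (D m) t :> D (Suc m) t"
        proof
          assume "m = 0"
          have "DERIV k t :> f1 i (x + t *\<^sub>R ee i) + - f1 i (x - t *\<^sub>R ee i) - 0"
            unfolding k_def by (intro DERIV_diff DERIV_add d1 m1 DERIV_const)
          then show ?thesis using \<open>m = 0\<close> by (simp add: D_def k1_def)
        next
          assume "m = 1"
          have "DERIV k1 t :> f2 i (x + t *\<^sub>R ee i) - - f2 i (x - t *\<^sub>R ee i)"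
            unfolding k1_def by (intro DERIV_diff d2 m2)
          then show ?thesis using \<open>m = 1\<close> by (simp add: D_def k2_def)
        qed
      qed
    qed
    then obtain t where t: "\<bar>t\<bar> \<le> \<bar>h\<bar>" and kh: "k h = (\<Sum>m<2. D m 0 / (fact m) * h ^ m) + D 2 t / (fact 2) * h ^ 2"
      by blast
    have "k h = k2 t / 2 * h^2"
      using kh by (simp add: D_def k_def k1_def numeral_2_eq_2 lessThan_Suc)
    then have q: "k h / h\<^sup>2 - f2 i x = ((f2 i (x + t *\<^sub>R ee i) - f2 i x) + (f2 i (x - t *\<^sub>R ee i) - f2 i x)) / 2"
      using hx by (simp add: k2_def field_simps)
    have xin: "x \<in> cball 0 (r+1)" using hx by simp
    have p1: "x + t *\<^sub>R ee i \<in> cball 0 (r+1)" "x - t *\<^sub>R ee i \<in> cball 0 (r+1)"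
      using hx t ne norm_triangle_ineq[of x "t *\<^sub>R ee i"] norm_triangle_ineq4[of x "t *\<^sub>R ee i"]
      by (auto simp only: mem_cball_0) auto
    have p2: "dist (x + t *\<^sub>R ee i) x < d" "dist (x - t *\<^sub>R ee i) x < d"
      using hx t ne by (auto simp: dist_norm)
    have "\<bar>f2 i (x + t *\<^sub>R ee i) - f2 i x\<bar> < \<epsilon>" "\<bar>f2 i (x - t *\<^sub>R ee i) - f2 i x\<bar> < \<epsilon>"
      using dd[OF xin p1(1) p2(1)] dd[OF xin p1(2) p2(2)] by (auto simp: dist_real_def)
    then show "\<bar>(f (x + h *\<^sub>R ee i) + f (x - h *\<^sub>R ee i) - 2 * f x) / h\<^sup>2 - f2 i x\<bar> \<le> \<epsilon>"
      using q unfolding k_def by (simp only: abs_less_iff) (simp add: abs_le_iff)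
  qed
qed





lemma fd_all:
  assumes "LC2 f f1 f2" "\<epsilon> > 0"
  shows "\<exists>\<delta>>0. \<forall>h x. 0 < \<bar>h\<bar> \<and> \<bar>h\<bar> < \<delta> \<and> norm x \<le> r \<longrightarrow>
     \<bar>(\<Sum>i\<in>UNIV. (f (x + h *\<^sub>R ee i) + f (x - h *\<^sub>R ee i) - 2 * f x) / h\<^sup>2) - (\<Sum>i\<in>UNIV. f2 i x)\<bar> \<le> \<epsilon>"
proof -
  have "\<forall>i. \<exists>\<delta>>0. \<forall>h x. 0 < \<bar>h\<bar> \<and> \<bar>h\<bar> < \<delta> \<and> norm x \<le> r \<longrightarrow>
     \<bar>(f (x + h *\<^sub>R ee i) + f (x - h *\<^sub>R ee i) - 2 * f x) / h\<^sup>2 - f2 i x\<bar> \<le> \<epsilon>/4"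
    by (intro allI) (rule fd_one[OF assms(1)], simp add: assms(2))
  then obtain d where d: "\<And>i. d i > 0" and
    dd: "\<And>i h x. 0 < \<bar>h\<bar> \<Longrightarrow> \<bar>h\<bar> < d i \<Longrightarrow> norm x \<le> r \<Longrightarrow>
     \<bar>(f (x + h *\<^sub>R ee i) + f (x - h *\<^sub>R ee i) - 2 * f x) / h\<^sup>2 - f2 i x\<bar> \<le> \<epsilon>/4"
    by metis
  define \<delta> where "\<delta> = Min (range d)"
  have "\<delta> \<in> range d" unfolding \<delta>_def by (rule Min_in) auto
  then have dpos: "\<delta> > 0" using d by auto
  have dle: "\<delta> \<le> d i" for i unfolding \<delta>_def by (rule Min_le) auto
  show ?thesis
  proof (intro exI[of _ \<delta>] conjI allI impI dpos)
    fix h :: real and x :: "real^4" assume H: "0 < \<bar>h\<bar> \<and> \<bar>h\<bar> < \<delta> \<and> norm x \<le> (r::real)"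
    have "\<bar>(\<Sum>i\<in>UNIV. (f (x + h *\<^sub>R ee i) + f (x - h *\<^sub>R ee i) - 2 * f x) / h\<^sup>2) - (\<Sum>i\<in>UNIV. f2 i x)\<bar>
       = \<bar>\<Sum>i\<in>UNIV. ((f (x + h *\<^sub>R ee i) + f (x - h *\<^sub>R ee i) - 2 * f x) / h\<^sup>2 - f2 i x)\<bar>"
      by (simp add: sum_subtractf)
    also have "\<dots> \<le> (\<Sum>i\<in>(UNIV::4 set). \<bar>(f (x + h *\<^sub>R ee i) + f (x - h *\<^sub>R ee i) - 2 * f x) / h\<^sup>2 - f2 i x\<bar>)"
      by (rule sum_abs)
    also have "\<dots> \<le> (\<Sum>i\<in>(UNIV::4 set). \<epsilon>/4)"
    proof (rule sum_mono)
      fix i :: 4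
      have "\<bar>h\<bar> < d i" using H dle[of i] by linarith
      then show "\<bar>(f (x + h *\<^sub>R ee i) + f (x - h *\<^sub>R ee i) - 2 * f x) / h\<^sup>2 - f2 i x\<bar> \<le> \<epsilon>/4"
        using dd[of h i x] H by blast
    qed
    also have "\<dots> = \<epsilon>" by simp
    finally show "\<bar>(\<Sum>i\<in>UNIV. (f (x + h *\<^sub>R ee i) + f (x - h *\<^sub>R ee i) - 2 * f x) / h\<^sup>2) - (\<Sum>i\<in>UNIV. f2 i x)\<bar> \<le> \<epsilon>" .
  qed
qed

definition box4 :: "real \<Rightarrow> (real^4) set" where
  "box4 r = cbox (-(\<chi> i. r)) (\<chi> i. r)"

lemma mem_box4: "x \<in> box4 r \<longleftrightarrow> (\<forall>i. \<bar>x$i\<bar> \<le> r)"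
  unfolding box4_def mem_box_cart by (simp add: abs_le_iff minus_le_iff conj_commute)

lemma norm_box4: "x \<in> box4 r \<Longrightarrow> norm x \<le> 4 * r"
proof -
  assume "x \<in> box4 r"
  then have "\<And>i. \<bar>x$i\<bar> \<le> r" by (simp add: mem_box4)
  then have "(\<Sum>i\<in>(UNIV::4 set). \<bar>x$i\<bar>) \<le> (\<Sum>i\<in>(UNIV::4 set). r)" by (intro sum_mono) auto
  then show ?thesis using norm_le_l1_cart[of x] by simp
qed

lemma notin_box4: "x \<notin> box4 r \<Longrightarrow> r < norm x"
proof -
  assume "x \<notin> box4 r"
  then obtain i where "\<bar>x$i\<bar> > r" by (auto simp: mem_box4 not_le)
  then show ?thesis using component_le_norm_cart[of x i] by simp
qed

lemma content_box4: "r \<ge> 0 \<Longrightarrow> measure lborel (box4 r) = (2*r)^4"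
proof -
  assume r: "r \<ge> 0"
  have "0 \<in> box4 r" using r by (simp add: mem_box4)
  then have "box4 r \<noteq> {}" by auto
  then show ?thesis unfolding box4_def using content_cbox_cart[of "-(\<chi> i. r)::real^4" "\<chi> i. r"]
    by (simp add: box4_def)
qed

lemma has_integral_UNIV_cbox:
  fixes g :: "real^4 \<Rightarrow> real"
  assumes "(g has_integral I) (cbox a b)" "\<And>x. x \<notin> cbox a b \<Longrightarrow> g x = 0"
  shows "(g has_integral I) UNIV"
proof -
  have "(\<lambda>x. if x \<in> cbox a b then g x else 0) = g" using assms(2) by auto
  then show ?thesis using has_integral_restrict_UNIV[of "cbox a b" g I] assms(1) by simp
qed

lemma cs_has_integral:
  fixes g :: "real^4 \<Rightarrow> real"
  assumes "continuous_on UNIV g" "\<And>x. x \<notin> box4 r \<Longrightarrow> g x = 0"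
  shows "(g has_integral integral (box4 r) g) UNIV"
proof -
  have "g integrable_on cbox (-(\<chi> i. r)::real^4) (\<chi> i. r)"
    by (rule integrable_continuous) (rule continuous_on_subset[OF assms(1)], simp)
  then have gi: "(g has_integral integral (box4 r) g) (cbox (-(\<chi> i. r)) (\<chi> i. r))"
    unfolding box4_def by (rule integrable_integral)
  show ?thesis
  proof (rule has_integral_UNIV_cbox[OF gi])
    fix x :: "real^4" assume "x \<notin> cbox (-(\<chi> i. r)) (\<chi> i. r)"
    then have "x \<notin> box4 r" unfolding box4_def .
    then show "g x = 0" by (rule assms(2))
  qed
qed

lemma cs_integral:
  fixes g :: "real^4 \<Rightarrow> real"
  assumes "continuous_on UNIV g" "\<And>x. x \<notin> box4 r \<Longrightarrow> g x = 0"
  shows "integral UNIV g = integral (box4 r) g"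
  using cs_has_integral[OF assms] by (rule integral_unique)

lemma cs_integrable:
  fixes g :: "real^4 \<Rightarrow> real"
  assumes "continuous_on UNIV g" "\<And>x. x \<notin> box4 r \<Longrightarrow> g x = 0"
  shows "g integrable_on UNIV"
  using cs_has_integral[OF assms] by (rule has_integral_integrable)

lemma translate_integral:
  fixes g :: "real^4 \<Rightarrow> real"
  assumes "continuous_on UNIV g" "\<And>x. x \<notin> box4 r \<Longrightarrow> g x = 0"
  shows "integral UNIV (\<lambda>x. g (x + c)) = integral UNIV g"
proof -
  let ?a = "-(\<chi> i. r)::real^4" and ?b = "(\<chi> i. r)::real^4"
  have gi: "(g has_integral integral (box4 r) g) (cbox ?a ?b)"
    using integrable_continuous[of ?a ?b g] continuous_on_subset[OF assms(1)]
    unfolding box4_def by auto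
  from has_integral_affinity'[OF gi, of 1 c]
  have "((\<lambda>x. g (x + c)) has_integral integral (box4 r) g) (cbox (?a - c) (?b - c))" by simp
  moreover have "g (x + c) = 0" if "x \<notin> cbox (?a - c) (?b - c)" for x
  proof -
    have "\<exists>i. \<not> (-(\<chi> i. r) - c)$i \<le> x$i \<or> \<not> x$i \<le> ((\<chi> i. r) - c)$i" using that unfolding mem_box_cart by blast
    then obtain i where "\<not> (-r - c$i) \<le> x$i \<or> \<not> x$i \<le> r - c$i" by auto
    then have "\<not> (-r \<le> (x + c)$i \<and> (x+c)$i \<le> r)" by auto
    then have "x + c \<notin> box4 r" unfolding box4_def mem_box_cart by auto
    then show ?thesis using assms(2) by blast
  qed
  ultimately have "((\<lambda>x. g (x + c)) has_integral integral (box4 r) g) UNIV"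
    by (rule has_integral_UNIV_cbox)
  then show ?thesis using cs_integral[OF assms] by (simp add: integral_unique)
qed




lemma cont_shift: "continuous_on UNIV (f::real^4 \<Rightarrow> real) \<Longrightarrow> continuous_on UNIV (\<lambda>x. f (x + c))"
  by (rule continuous_on_compose2[of UNIV f]) (auto intro!: continuous_intros)

lemma cont_shift': "continuous_on UNIV (f::real^4 \<Rightarrow> real) \<Longrightarrow> continuous_on UNIV (\<lambda>x. f (x - c))"
  by (rule continuous_on_compose2[of UNIV f]) (auto intro!: continuous_intros)

lemma out_shift:
  assumes "x \<notin> box4 (r + 1)" "norm (c::real^4) \<le> 1"
  shows "x + c \<notin> box4 r"
proof -
  obtain j where j: "\<bar>x$j\<bar> > r + 1" using assms(1) by (auto simp: mem_box4 not_le)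
  have "\<bar>c$j\<bar> \<le> 1" using component_le_norm_cart[of c j] assms(2) by linarith
  then have "\<bar>(x + c)$j\<bar> > r" using j by auto
  then show ?thesis by (auto simp: mem_box4 not_le)
qed

lemma box4_mono: "r \<le> R \<Longrightarrow> box4 r \<subseteq> box4 R"
  by (auto simp: mem_box4) (meson order_trans)

lemma bounded_on_box:
  assumes "continuous_on UNIV (f::real^4 \<Rightarrow> real)"
  shows "\<exists>M\<ge>0. \<forall>x\<in>box4 R. \<bar>f x\<bar> \<le> M"
proof -
  have "compact (f ` box4 R)" unfolding box4_def
    by (rule compact_continuous_image) (auto intro: continuous_on_subset[OF assms])
  then obtain M where "\<forall>y\<in>f ` box4 R. norm y \<le> M" using compact_imp_bounded bounded_iff by metis
  then show ?thesis by (intro exI[of _ "max M 0"]) auto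
qed

lemma cs_bound:
  fixes g :: "real^4 \<Rightarrow> real"
  assumes "continuous_on UNIV g" "\<And>x. x \<notin> box4 R \<Longrightarrow> g x = 0" "\<And>x. x \<in> box4 R \<Longrightarrow> \<bar>g x\<bar> \<le> B" "B \<ge> 0" "R \<ge> 0"
  shows "\<bar>integral UNIV g\<bar> \<le> B * (2*R)^4"
proof -
  have "g integrable_on cbox (-(\<chi> i. R)::real^4) (\<chi> i. R)"
    by (rule integrable_continuous) (rule continuous_on_subset[OF assms(1)], simp)
  then have gi: "(g has_integral integral (box4 R) g) (cbox (-(\<chi> i. R)) (\<chi> i. R))"
    unfolding box4_def by (rule integrable_integral)
  have "norm (integral (box4 R) g) \<le> B * measure lborel (cbox (-(\<chi> i. R)::real^4) (\<chi> i. R))"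
    by (rule has_integral_bound[OF assms(4) gi]) (use assms(3) in \<open>auto simp: box4_def\<close>)
  then show ?thesis using cs_integral[OF assms(1,2)] content_box4[OF assms(5)] by (simp add: box4_def)
qed

lemma eps_zero:
  fixes a K :: real
  assumes "K \<ge> 0" "\<And>\<epsilon>. \<epsilon> > 0 \<Longrightarrow> \<bar>a\<bar> \<le> \<epsilon> * K"
  shows "a = 0"
proof (rule ccontr)
  assume "a \<noteq> 0"
  then have "\<bar>a\<bar> > 0" by simp
  define \<epsilon> where "\<epsilon> = \<bar>a\<bar> / (2 * (K + 1))"
  have ep: "\<epsilon> > 0" using \<open>\<bar>a\<bar> > 0\<close> assms(1) by (simp add: \<epsilon>_def)
  have "\<epsilon> * K < \<bar>a\<bar>"
  proof -
    have "\<epsilon> * K \<le> \<epsilon> * (K + 1)" using ep by simp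
    also have "\<dots> = \<bar>a\<bar> / 2" using assms(1) by (simp add: \<epsilon>_def field_simps)
    finally show ?thesis using \<open>\<bar>a\<bar> > 0\<close> by linarith
  qed
  then show False using assms(2)[OF ep] by linarith
qed


lemma translate_prod:
  fixes v \<phi> :: "real^4 \<Rightarrow> real"
  assumes cv: "continuous_on UNIV v" and cp: "continuous_on UNIV \<phi>"
    and sp: "\<And>x. x \<notin> box4 r \<Longrightarrow> \<phi> x = 0" and c: "norm c \<le> 1"
  shows "integral UNIV (\<lambda>x. v (x + c) * \<phi> x) = integral UNIV (\<lambda>x. v x * \<phi> (x - c))"
proof -
  have "integral UNIV (\<lambda>x. (\<lambda>y. v y * \<phi> (y - c)) (x + c)) = integral UNIV (\<lambda>y. v y * \<phi> (y - c))"
  proof (rule translate_integral[where r = "r + 1"])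
    show "continuous_on UNIV (\<lambda>y. v y * \<phi> (y - c))" by (intro continuous_intros cv cont_shift'[OF cp])
    fix x assume "x \<notin> box4 (r + 1)"
    then have "x + (- c) \<notin> box4 r" by (rule out_shift) (use c in simp)
    then show "v x * \<phi> (x - c) = 0" using sp by simp
  qed
  then show ?thesis by simp
qed

lemma ibp:
  fixes v \<phi> :: "real^4 \<Rightarrow> real"
  assumes v: "LC2 v f1 f2" and cv: "continuous_on UNIV v"
    and p: "LC2 \<phi> g1 g2" and cp: "continuous_on UNIV \<phi>"
    and r: "r \<ge> 0" and sp: "\<And>x. x \<notin> box4 r \<Longrightarrow> \<phi> x = 0"
    and sp2: "\<And>i x. x \<notin> box4 r \<Longrightarrow> g2 i x = 0"
  shows "integral UNIV (\<lambda>x. (\<Sum>i\<in>UNIV. f2 i x) * \<phi> x) = integral UNIV (\<lambda>x. v x * (\<Sum>i\<in>UNIV. g2 i x))"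
proof -
  define R where "R = r + 1"
  have R: "R \<ge> 0" using r by (simp add: R_def)
  define Dv where "Dv h x = (\<Sum>i\<in>UNIV. (v (x + h *\<^sub>R ee i) + v (x - h *\<^sub>R ee i) - 2 * v x) / h\<^sup>2)" for h x
  define Dp where "Dp h x = (\<Sum>i\<in>UNIV. (\<phi> (x + h *\<^sub>R ee i) + \<phi> (x - h *\<^sub>R ee i) - 2 * \<phi> x) / h\<^sup>2)" for h x
  define Lv where "Lv x = (\<Sum>i\<in>UNIV. f2 i x)" for x
  define Lp where "Lp x = (\<Sum>i\<in>UNIV. g2 i x)" for x
  have cf2: "continuous_on UNIV (f2 i)" for i using v unfolding LC2_def by blast
  have cg2: "continuous_on UNIV (g2 i)" for i using p unfolding LC2_def by blast
  have cLv: "continuous_on UNIV Lv" unfolding Lv_def by (intro continuous_on_sum cf2)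
  have cLp: "continuous_on UNIV Lp" unfolding Lp_def by (intro continuous_on_sum cg2)
  have cDv: "continuous_on UNIV (Dv h)" for h unfolding Dv_def divide_inverse
    by (intro continuous_intros cont_shift[OF cv] cont_shift'[OF cv] cv)
  have cDp: "continuous_on UNIV (Dp h)" for h unfolding Dp_def divide_inverse
    by (intro continuous_intros cont_shift[OF cp] cont_shift'[OF cp] cp)
  have outR: "x \<notin> box4 r" if "x \<notin> box4 R" for x
    using that box4_mono[of r R] by (auto simp: R_def)
  have nee: "norm (h *\<^sub>R ee i :: real^4) = \<bar>h\<bar>" for h i by simp
  have shR: "x + c \<notin> box4 r" if "x \<notin> box4 R" "norm c \<le> 1" for x c
    using out_shift[of x r c] that by (simp add: R_def)
  have Dp0: "Dp h x = 0" if "x \<notin> box4 R" "\<bar>h\<bar> \<le> 1" for h x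
  proof -
    have "\<phi> (x + h *\<^sub>R ee i) = 0" "\<phi> (x - h *\<^sub>R ee i) = 0" "\<phi> x = 0" for i
      using sp shR[OF that(1), of "h *\<^sub>R ee i"] shR[OF that(1), of "-(h *\<^sub>R ee i)"] outR[OF that(1)] that(2)
      by (auto simp: nee)
    then show ?thesis by (simp add: Dp_def)
  qed
  \<comment> \<open>Discrete integration by parts\<close>
  have S2: "integral UNIV (\<lambda>x. Dv h x * \<phi> x) = integral UNIV (\<lambda>x. v x * Dp h x)"
    if h: "h \<noteq> 0" "\<bar>h\<bar> \<le> 1" for h
  proof -
    define P where "P c x = v (x + c) * \<phi> x - v x * \<phi> (x - c)" for c x
    have intP: "integral UNIV (P c) = 0" "P c integrable_on UNIV" if "norm c \<le> 1" for c
    proof -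
      have i1: "(\<lambda>x. v (x + c) * \<phi> x) integrable_on UNIV"
        by (rule cs_integrable[of _ r]) (auto intro!: continuous_intros cont_shift cv cp simp: sp)
      have i2: "(\<lambda>x. v x * \<phi> (x - c)) integrable_on UNIV"
      proof (rule cs_integrable[of _ R])
        show "continuous_on UNIV (\<lambda>x. v x * \<phi> (x - c))" by (intro continuous_intros cv cont_shift'[OF cp])
        fix x assume "x \<notin> box4 R"
        then have "x + - c \<notin> box4 r" by (rule shR) (use that in simp)
        then show "v x * \<phi> (x - c) = 0" using sp by simp
      qed
      show "integral UNIV (P c) = 0" unfolding P_def
        using integral_diff[OF i1 i2] translate_prod[OF cv cp sp that] by simp
      show "P c integrable_on UNIV" unfolding P_def using integrable_diff[OF i1 i2] by simp
    qed
    have eq: "Dv h x * \<phi> x - v x * Dp h x = (\<Sum>i\<in>UNIV. (P (h *\<^sub>R ee i) x + P (-(h *\<^sub>R ee i)) x) / h\<^sup>2)" for x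
      unfolding Dv_def Dp_def P_def sum_distrib_right sum_distrib_left sum_subtractf[symmetric]
      using h(1) by (intro sum.cong refl) (simp add: field_simps)
    have iP2: "(\<lambda>x. P (h *\<^sub>R ee i) x + P (-(h *\<^sub>R ee i)) x) integrable_on UNIV" for i
      using integrable_add[OF intP(2) intP(2), of "h *\<^sub>R ee i" "-(h *\<^sub>R ee i)"] h by (auto simp: nee)
    have iP: "(\<lambda>x. (P (h *\<^sub>R ee i) x + P (-(h *\<^sub>R ee i)) x) / h\<^sup>2) integrable_on UNIV" for i
      using iP2 by (rule integrable_on_divide)
    have "integral UNIV (\<lambda>x. Dv h x * \<phi> x - v x * Dp h x) = 0"
      unfolding eq
      using h by (subst integral_sum) (auto intro!: iP iP2 simp: integral_add[OF intP(2) intP(2)] intP nee)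
    moreover have "(\<lambda>x. Dv h x * \<phi> x) integrable_on UNIV"
      by (rule cs_integrable[of _ r]) (auto intro!: continuous_intros cDv cp simp: sp)
    moreover have "(\<lambda>x. v x * Dp h x) integrable_on UNIV"
      by (rule cs_integrable[of _ R]) (auto intro!: continuous_intros cDp cv simp: Dp0 h)
    ultimately show ?thesis by (simp add: integral_diff)
  qed
  obtain Mp where Mp: "Mp \<ge> 0" "\<And>x. x \<in> box4 R \<Longrightarrow> \<bar>\<phi> x\<bar> \<le> Mp" using bounded_on_box[OF cp] by blast
  obtain Mv where Mv: "Mv \<ge> 0" "\<And>x. x \<in> box4 R \<Longrightarrow> \<bar>v x\<bar> \<le> Mv" using bounded_on_box[OF cv] by blast
  have "integral UNIV (\<lambda>x. Lv x * \<phi> x) - integral UNIV (\<lambda>x. v x * Lp x) = 0"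
  proof (rule eps_zero[where K = "(Mp + Mv) * (2*R)^4"])
    show "0 \<le> (Mp + Mv) * (2 * R) ^ 4" using Mp Mv R by simp
    fix \<epsilon> :: real assume ep: "\<epsilon> > 0"
    obtain d1 where d1: "d1 > 0" and dd1: "\<And>h x. 0 < \<bar>h\<bar> \<and> \<bar>h\<bar> < d1 \<and> norm x \<le> 4 * R \<Longrightarrow> \<bar>Dv h x - Lv x\<bar> \<le> \<epsilon>"
      using fd_all[OF v ep, of "4 * R"] unfolding Dv_def Lv_def by blast
    obtain d2 where d2: "d2 > 0" and dd2: "\<And>h x. 0 < \<bar>h\<bar> \<and> \<bar>h\<bar> < d2 \<and> norm x \<le> 4 * R \<Longrightarrow> \<bar>Dp h x - Lp x\<bar> \<le> \<epsilon>"
      using fd_all[OF p ep, of "4 * R"] unfolding Dp_def Lp_def by blast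
    define h where "h = min (min d1 d2) 1 / 2"
    have h: "h > 0" "h < d1" "h < d2" "h \<le> 1" using d1 d2 by (auto simp: h_def)
    then have habs: "\<bar>h\<bar> \<le> 1" by simp
    have e1: "\<bar>integral UNIV (\<lambda>x. Lv x * \<phi> x - Dv h x * \<phi> x)\<bar> \<le> (\<epsilon> * Mp) * (2*R)^4"
    proof (rule cs_bound[OF _ _ _ _ R])
      show "continuous_on UNIV (\<lambda>x. Lv x * \<phi> x - Dv h x * \<phi> x)" by (intro continuous_intros cLv cDv cp)
      show "Lv x * \<phi> x - Dv h x * \<phi> x = 0" if "x \<notin> box4 R" for x using sp outR[OF that] by simp
      show "0 \<le> \<epsilon> * Mp" using ep Mp by simp
      fix x assume x: "x \<in> box4 R"
      have "\<bar>Lv x * \<phi> x - Dv h x * \<phi> x\<bar> = \<bar>Dv h x - Lv x\<bar> * \<bar>\<phi> x\<bar>" by (simp add: abs_mult[symmetric] algebra_simps)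
      also have "\<dots> \<le> \<epsilon> * Mp" using dd1[of h x] h norm_box4[OF x] Mp(2)[OF x] ep
        by (intro mult_mono) auto
      finally show "\<bar>Lv x * \<phi> x - Dv h x * \<phi> x\<bar> \<le> \<epsilon> * Mp" .
    qed
    have e2: "\<bar>integral UNIV (\<lambda>x. v x * Lp x - v x * Dp h x)\<bar> \<le> (\<epsilon> * Mv) * (2*R)^4"
    proof (rule cs_bound[OF _ _ _ _ R])
      show "continuous_on UNIV (\<lambda>x. v x * Lp x - v x * Dp h x)" by (intro continuous_intros cLp cDp cv)
      show "v x * Lp x - v x * Dp h x = 0" if "x \<notin> box4 R" for x
        using sp2 outR[OF that] Dp0[OF that] habs by (simp add: Lp_def)
      show "0 \<le> \<epsilon> * Mv" using ep Mv by simp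
      fix x assume x: "x \<in> box4 R"
      have "\<bar>v x * Lp x - v x * Dp h x\<bar> = \<bar>Dp h x - Lp x\<bar> * \<bar>v x\<bar>" by (simp add: abs_mult[symmetric] algebra_simps)
      also have "\<dots> \<le> \<epsilon> * Mv" using dd2[of h x] h norm_box4[OF x] Mv(2)[OF x] ep
        by (intro mult_mono) auto
      finally show "\<bar>v x * Lp x - v x * Dp h x\<bar> \<le> \<epsilon> * Mv" .
    qed
    have iLv: "(\<lambda>x. Lv x * \<phi> x) integrable_on UNIV"
      by (rule cs_integrable[of _ r]) (auto intro!: continuous_intros cLv cp simp: sp)
    have iDv: "(\<lambda>x. Dv h x * \<phi> x) integrable_on UNIV"
      by (rule cs_integrable[of _ r]) (auto intro!: continuous_intros cDv cp simp: sp)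
    have iLp: "(\<lambda>x. v x * Lp x) integrable_on UNIV"
      by (rule cs_integrable[of _ r]) (auto intro!: continuous_intros cLp cv cg2 simp: sp2 Lp_def)
    have iDp: "(\<lambda>x. v x * Dp h x) integrable_on UNIV"
      by (rule cs_integrable[of _ R]) (auto intro!: continuous_intros cDp cv simp: Dp0 habs)
    have "integral UNIV (\<lambda>x. Lv x * \<phi> x) - integral UNIV (\<lambda>x. v x * Lp x)
        = integral UNIV (\<lambda>x. Lv x * \<phi> x - Dv h x * \<phi> x) - integral UNIV (\<lambda>x. v x * Lp x - v x * Dp h x)"
      using S2[of h] h integral_diff[OF iLv iDv] integral_diff[OF iLp iDp] by simp
    then show "\<bar>integral UNIV (\<lambda>x. Lv x * \<phi> x) - integral UNIV (\<lambda>x. v x * Lp x)\<bar> \<le> \<epsilon> * ((Mp + Mv) * (2 * R) ^ 4)"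
      using e1 e2 by (simp add: algebra_simps)
  qed
  then show ?thesis by (simp add: Lv_def Lp_def)
qed




definition pp :: "nat \<Rightarrow> real \<Rightarrow> real" where "pp n y = (max 0 y) ^ n"

lemma pp_cont [continuous_intros]: "continuous_on S f \<Longrightarrow> continuous_on S (\<lambda>x. pp n (f x))"
  unfolding pp_def by (intro continuous_intros)

lemma pp_nonneg: "pp n y \<ge> 0" by (simp add: pp_def)

lemma pp_neg: "y \<le> 0 \<Longrightarrow> n \<ge> 1 \<Longrightarrow> pp n y = 0" by (simp add: pp_def max_def)

lemma pp_Suc: "n \<ge> 1 \<Longrightarrow> y * pp n y = pp (Suc n) y"
  by (cases "y \<le> 0") (auto simp: pp_def max_def)

lemma pp_deriv:
  assumes "n \<ge> 2"
  shows "DERIV (pp n) y :> real n * pp (n - 1) y"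
proof -
  consider "y > 0" | "y < 0" | "y = 0" by linarith
  then show ?thesis
  proof cases
    case 1
    have "DERIV (\<lambda>z. z ^ n) y :> real n * y ^ (n - 1)" using DERIV_pow[of n y] by simp
    then have "DERIV (pp n) y :> real n * y ^ (n - 1)"
      by (rule has_field_derivative_transform_within_open[where S = "{0<..}"]) (use 1 in \<open>auto simp: pp_def\<close>)
    then show ?thesis using 1 by (simp add: pp_def)
  next
    case 2
    have "DERIV (\<lambda>z. 0) y :> 0" by simp
    then have "DERIV (pp n) y :> 0"
      by (rule has_field_derivative_transform_within_open[where S = "{..<0}"]) (use 2 assms in \<open>auto simp: pp_def\<close>)
    then show ?thesis using 2 assms by (simp add: pp_neg)
  next
    case 3
    have "((\<lambda>z. (pp n z - pp n 0) / (z - 0)) \<longlongrightarrow> 0) (at 0)"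
    proof (rule Lim_null_comparison)
      show "\<forall>\<^sub>F z in at 0. norm ((pp n z - pp n 0) / (z - 0)) \<le> \<bar>z\<bar> ^ (n - 1)"
      proof (rule always_eventually, intro allI)
        fix z :: real
        have p0: "pp n 0 = 0" using assms by (simp add: pp_def)
        have "\<bar>pp n z\<bar> \<le> \<bar>z\<bar> ^ n" unfolding pp_def by (simp add: power_mono)
        also have "\<dots> = \<bar>z\<bar> * \<bar>z\<bar> ^ (n - 1)" using assms by (cases n) auto
        finally show "norm ((pp n z - pp n 0) / (z - 0)) \<le> \<bar>z\<bar> ^ (n - 1)"
          by (cases "z = 0") (auto simp: p0 divide_le_eq abs_divide mult.commute)
      qed
      have "((\<lambda>z::real. \<bar>z\<bar> ^ (n - 1)) \<longlongrightarrow> \<bar>0\<bar> ^ (n - 1)) (at 0)"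
        by (intro tendsto_intros)
      moreover have "\<bar>0::real\<bar> ^ (n - 1) = 0" using assms by simp
      ultimately show "((\<lambda>z::real. \<bar>z\<bar> ^ (n - 1)) \<longlongrightarrow> 0) (at 0)" by metis
    qed
    then have "DERIV (pp n) 0 :> 0" by (simp add: has_field_derivative_iff)
    then show ?thesis using 3 assms by (simp add: pp_def power_0_left)
  qed
qed

lemma pp_deriv_chain:
  assumes "n \<ge> 2" "DERIV f s :> f'"
  shows "DERIV (\<lambda>s. pp n (f s)) s :> real n * pp (n - 1) (f s) * f'"
  using DERIV_chain2[OF pp_deriv[OF assms(1)] assms(2)] by simp

definition K :: "nat \<Rightarrow> real \<Rightarrow> real^4 \<Rightarrow> real" where
  "K m t x = pp m (2 * t - x \<bullet> x) / t ^ (m + 2)"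

definition K1 :: "nat \<Rightarrow> real \<Rightarrow> 4 \<Rightarrow> real^4 \<Rightarrow> real" where
  "K1 m t i y = - 2 * real m * pp (m - 1) (2 * t - y \<bullet> y) * y$i / t ^ (m + 2)"

definition K2 :: "nat \<Rightarrow> real \<Rightarrow> 4 \<Rightarrow> real^4 \<Rightarrow> real" where
  "K2 m t i y = (4 * real m * real (m - 1) * pp (m - 2) (2 * t - y \<bullet> y) * (y$i)^2
                 - 2 * real m * pp (m - 1) (2 * t - y \<bullet> y)) / t ^ (m + 2)"

definition LK :: "nat \<Rightarrow> real \<Rightarrow> real^4 \<Rightarrow> real" where
  "LK m t y = (4 * real m * real (m - 1) * pp (m - 2) (2 * t - y \<bullet> y) * (y \<bullet> y)
                 - 8 * real m * pp (m - 1) (2 * t - y \<bullet> y)) / t ^ (m + 2)"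

definition Kt :: "nat \<Rightarrow> real \<Rightarrow> real^4 \<Rightarrow> real" where
  "Kt m t y = 2 * real m * pp (m - 1) (2 * t - y \<bullet> y) / t ^ (m + 2)
             - real (m + 2) * pp m (2 * t - y \<bullet> y) / t ^ (m + 3)"

lemma line_inner: "(x + s *\<^sub>R ee i) \<bullet> (x + s *\<^sub>R ee i) = x \<bullet> x + 2 * s * x$i + s\<^sup>2"
  by (simp add: inner_add_left inner_add_right inner_axis inner_axis' inner_commute power2_eq_square algebra_simps)

lemma line_comp: "(x + s *\<^sub>R ee i)$i = x$i + s" by simp

lemma LK_sum: "(\<Sum>i\<in>UNIV. K2 m t i y) = LK m t y"
proof -
  have "(\<Sum>i\<in>UNIV. (y$i)^2) = y \<bullet> y" by (simp add: inner_vec_def power2_eq_square)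
  then show ?thesis unfolding K2_def LK_def
    by (simp add: sum_divide_distrib[symmetric] sum_subtractf sum_distrib_left[symmetric])
qed

lemma div_eq: "a = b \<Longrightarrow> a / T = b / (T::real)" by simp

lemma aux2: "- 2 * M * (N * P * - (2 * a + 2 * s) * (a + s) + Q * 1) = 4 * M * N * P * (a + s)\<^sup>2 - 2 * M * (Q::real)"
  by (simp add: power2_eq_square algebra_simps)

lemma K_LC2:
  assumes "m \<ge> 3"
  shows "LC2 (K m t) (K1 m t) (K2 m t)"
  unfolding LC2_def
proof (intro conjI allI)
  fix i :: 4 and x :: "real^4" and s :: real
  have m2: "m - 1 - 1 = m - 2" by simp
  have din: "DERIV (\<lambda>s. 2 * t - (x \<bullet> x + 2 * s * x$i + s\<^sup>2)) s :> - (2 * x$i + 2 * s)"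
    by (auto intro!: derivative_eq_intros)
  have "DERIV (\<lambda>s. pp m (2 * t - (x \<bullet> x + 2 * s * x$i + s\<^sup>2)) / t ^ (m + 2)) s :>
          real m * pp (m - 1) (2 * t - (x \<bullet> x + 2 * s * x$i + s\<^sup>2)) * - (2 * x$i + 2 * s) / t ^ (m + 2)"
    using pp_deriv_chain[OF _ din, of m] assms by (intro DERIV_cdivide) auto
  then show "((\<lambda>s. K m t (x + s *\<^sub>R ee i)) has_real_derivative K1 m t i (x + s *\<^sub>R ee i)) (at s)"
    unfolding K_def K1_def line_inner line_comp
    by (rule DERIV_cong) (rule div_eq, algebra)
  have "DERIV (\<lambda>s. - 2 * real m * pp (m - 1) (2 * t - (x \<bullet> x + 2 * s * x$i + s\<^sup>2)) * (x$i + s) / t ^ (m + 2)) s :>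
     - 2 * real m * (real (m - 1) * pp (m - 1 - 1) (2 * t - (x \<bullet> x + 2 * s * x$i + s\<^sup>2)) * - (2 * x$i + 2 * s) * (x$i + s)
       + pp (m - 1) (2 * t - (x \<bullet> x + 2 * s * x$i + s\<^sup>2)) * 1) / t ^ (m + 2)"
  proof -
    have d1: "DERIV (\<lambda>s. pp (m - 1) (2 * t - (x \<bullet> x + 2 * s * x$i + s\<^sup>2))) s :>
       real (m - 1) * pp (m - 1 - 1) (2 * t - (x \<bullet> x + 2 * s * x$i + s\<^sup>2)) * - (2 * x$i + 2 * s)"
      by (rule pp_deriv_chain[OF _ din]) (use assms in simp)
    have d2: "DERIV (\<lambda>s. x$i + s) s :> 1" by (auto intro!: derivative_eq_intros)
    note d3 = DERIV_mult[OF d1 d2]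
    show ?thesis using DERIV_cdivide[OF DERIV_cmult[OF d3, of "- 2 * real m"], of "t ^ (m + 2)"] by (simp only: mult.assoc mult_1_left mult_1_right)
  qed
  then have "DERIV (\<lambda>s. - 2 * real m * pp (m - 1) (2 * t - (x \<bullet> x + 2 * s * x$i + s\<^sup>2)) * (x$i + s) / t ^ (m + 2)) s :>
     (4 * real m * real (m - 1) * pp (m - 2) (2 * t - (x \<bullet> x + 2 * s * x$i + s\<^sup>2)) * (x$i + s)\<^sup>2
       - 2 * real m * pp (m - 1) (2 * t - (x \<bullet> x + 2 * s * x$i + s\<^sup>2))) / t ^ (m + 2)"
    unfolding m2 aux2 .
  then show "((\<lambda>s. K1 m t i (x + s *\<^sub>R ee i)) has_real_derivative K2 m t i (x + s *\<^sub>R ee i)) (at s)"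
    unfolding K1_def K2_def line_inner line_comp .
next
  fix i :: 4
  show "continuous_on UNIV (K2 m t i)" unfolding K2_def divide_inverse by (intro continuous_intros)
qed




lemma K_cont: "continuous_on UNIV (K m t)"
  unfolding K_def divide_inverse by (intro continuous_intros)

lemma LK_cont: "continuous_on UNIV (LK m t)"
  unfolding LK_def divide_inverse by (intro continuous_intros)

lemma Kt_cont: "continuous_on UNIV (Kt m t)"
  unfolding Kt_def divide_inverse by (intro continuous_intros)

lemma out_neg:
  assumes "x \<notin> box4 r" "r \<ge> 0" "2 * t \<le> r\<^sup>2"
  shows "2 * t - x \<bullet> x < 0"
proof -
  have "r < norm x" by (rule notin_box4[OF assms(1)])
  then have "r\<^sup>2 < (norm x)\<^sup>2" using assms(2) by (intro power_strict_mono) auto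
  then show ?thesis using assms(3) by (simp add: power2_norm_eq_inner)
qed

lemma K_supp: "m \<ge> 1 \<Longrightarrow> x \<notin> box4 r \<Longrightarrow> r \<ge> 0 \<Longrightarrow> 2 * t \<le> r\<^sup>2 \<Longrightarrow> K m t x = 0"
  using out_neg[of x r t] by (simp add: K_def pp_neg)

lemma K2_supp: "m \<ge> 3 \<Longrightarrow> x \<notin> box4 r \<Longrightarrow> r \<ge> 0 \<Longrightarrow> 2 * t \<le> r\<^sup>2 \<Longrightarrow> K2 m t i x = 0"
  using out_neg[of x r t] by (simp add: K2_def pp_neg)

lemma LK_supp: "m \<ge> 3 \<Longrightarrow> x \<notin> box4 r \<Longrightarrow> r \<ge> 0 \<Longrightarrow> 2 * t \<le> r\<^sup>2 \<Longrightarrow> LK m t x = 0"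
  using out_neg[of x r t] by (simp add: LK_def pp_neg)

lemma Kt_supp: "m \<ge> 2 \<Longrightarrow> x \<notin> box4 r \<Longrightarrow> r \<ge> 0 \<Longrightarrow> 2 * t \<le> r\<^sup>2 \<Longrightarrow> Kt m t x = 0"
  using out_neg[of x r t] by (simp add: Kt_def pp_neg)

lemma tsq: "(t::real) \<ge> 0 \<Longrightarrow> 2 * t \<le> (t + 1)\<^sup>2"
  by (simp add: power2_eq_square algebra_simps)

lemma ibp_K:
  assumes "Ck 2 v" "m \<ge> 3" "t > 0"
  shows "integral UNIV (\<lambda>x. laplacian v x * K m t x) = integral UNIV (\<lambda>x. v x * LK m t x)"
proof -
  have "integral UNIV (\<lambda>x. (\<Sum>i\<in>UNIV. partial i (partial i v) x) * K m t x) =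
        integral UNIV (\<lambda>x. v x * (\<Sum>i\<in>UNIV. K2 m t i x))"
  proof (rule ibp[OF Ck2_LC2[OF assms(1)] Ck_cont[OF assms(1)] K_LC2[OF assms(2)] K_cont])
    show "0 \<le> t + 1" using assms by simp
    show "K m t x = 0" if "x \<notin> box4 (t + 1)" for x
      using K_supp[OF _ that _ tsq] assms by simp
    show "K2 m t i x = 0" if "x \<notin> box4 (t + 1)" for i x
      using K2_supp[OF _ that _ tsq] assms by simp
  qed
  then show ?thesis by (simp add: laplacian_def LK_sum)
qed

lemma Kt_LK_alg:
  fixes t T a P1 M :: real
  assumes "t \<noteq> 0" "T \<noteq> 0"
  shows "(4 * (M + 1) * M * P1 * (2 * t - a) - 8 * (M + 1) * (a * P1)) / (T * t)
       = (2 * M * P1 / T - (M + 2) * (a * P1) / (T * t)) * (4 * (M + 1))"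
  using assms by (simp add: field_simps)

lemma Kt_LK:
  assumes "m \<ge> 2" "t \<noteq> 0"
  shows "LK (Suc m) t y = Kt m t y * (4 * (real m + 1))"
proof -
  define a where "a = 2 * t - y \<bullet> y"
  have yy: "y \<bullet> y = 2 * t - a" by (simp add: a_def)
  have s12: "Suc m - 1 = m" "Suc m - 2 = m - 1" by simp_all
  have pm: "pp m a = a * pp (m - 1) a" using pp_Suc[of "m - 1" a] assms(1) by simp
  have e3: "m + 3 = Suc (m + 2)" "Suc m + 2 = Suc (m + 2)" by simp_all
  have tp: "t ^ (Suc m + 2) = t ^ (m + 2) * t" "t ^ (m + 3) = t ^ (m + 2) * t"
    unfolding e3 by (simp_all only: power_Suc2)
  have "LK (Suc m) t y = (4 * (real m + 1) * real m * pp (m - 1) a * (2 * t - a) - 8 * (real m + 1) * (a * pp (m - 1) a)) / (t ^ (m + 2) * t)"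
    unfolding LK_def a_def[symmetric] yy tp s12 by (simp add: algebra_simps pm)
  also have "\<dots> = (2 * real m * pp (m - 1) a / t ^ (m + 2) - (real m + 2) * (a * pp (m - 1) a) / (t ^ (m + 2) * t)) * (4 * (real m + 1))"
    by (rule Kt_LK_alg) (use assms in simp_all)
  also have "\<dots> = Kt m t y * (4 * (real m + 1))"
    unfolding Kt_def a_def[symmetric] tp pm by simp
  finally show ?thesis .
qed

lemma K_deriv_t:
  assumes "m \<ge> 2" "t > 0"
  shows "DERIV (\<lambda>t. K m t x) t :> Kt m t x"
proof -
  define c where "c = x \<bullet> x"
  have d1: "DERIV (\<lambda>t. pp m (2 * t - c)) t :> real m * pp (m - 1) (2 * t - c) * 2"
    by (rule pp_deriv_chain[OF assms(1)]) (auto intro!: derivative_eq_intros)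
  have d2: "DERIV (\<lambda>t. t ^ (m + 2)) t :> real (m + 2) * t ^ (m + 1)"
    using DERIV_pow[of "m + 2" t] by simp
  have tn: "t ^ (m + 2) \<noteq> 0" using assms by simp
  note d3 = DERIV_divide[OF d1 d2 tn]
  have e3: "m + 3 = Suc (Suc (m + 1))" "m + 2 = Suc (m + 1)" by simp_all
  have tp: "t ^ (m + 2) = t ^ (m + 1) * t" "t ^ (m + 3) = t ^ (m + 1) * t * t"
    unfolding e3 by (simp_all only: power_Suc2)
  have eq: "(real m * pp (m - 1) (2 * t - c) * 2 * t ^ (m + 2) - pp m (2 * t - c) * (real (m + 2) * t ^ (m + 1))) /
       (t ^ (m + 2) * t ^ (m + 2)) = Kt m t x"
    unfolding Kt_def c_def[symmetric] tp using assms by (simp add: field_simps)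
  show ?thesis using d3 unfolding eq K_def c_def[symmetric] .
qed




lemma deriv_int:
  fixes w :: "real^4 \<Rightarrow> real"
  assumes cw: "continuous_on UNIV w" and m: "m \<ge> 2" and t0: "t0 > 0"
  shows "DERIV (\<lambda>t. integral UNIV (\<lambda>x. w x * K m t x)) t0 :> integral UNIV (\<lambda>x. w x * Kt m t0 x)"
proof -
  define U where "U = {t0/2 <..< 2*t0}"
  define r where "r = 2 * t0 + 1"
  define a :: "real^4" where "a = -(\<chi> i. r)"
  define b :: "real^4" where "b = (\<chi> i. r)"
  have box: "box4 r = cbox a b" by (simp add: box4_def a_def b_def)
  have r0: "r \<ge> 0" using t0 by (simp add: r_def)
  have rr: "2 * t \<le> r\<^sup>2" if "t \<in> U" for t
  proof -
    have "2 * t < 4 * t0" using that by (simp add: U_def)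
    also have "4 * t0 \<le> r\<^sup>2" unfolding r_def using t0 by (simp add: power2_eq_square algebra_simps)
    finally show ?thesis by simp
  qed
  have m1: "Suc 0 \<le> m" using m by simp
  have Upos: "t > 0" if "t \<in> U" for t using that t0 by (simp add: U_def)
  have t0U: "t0 \<in> U" using t0 by (simp add: U_def)
  have openU: "open U" by (simp add: U_def)
  have L: "((\<lambda>t. integral (cbox a b) (\<lambda>x. w x * K m t x)) has_field_derivative integral (cbox a b) (\<lambda>x. w x * Kt m t0 x)) (at t0 within U)"
  proof (rule leibniz_rule_field_derivative[where fx = "\<lambda>t x. w x * Kt m t x"])
    fix t x assume "t \<in> U" "x \<in> cbox a b"
    have "DERIV (\<lambda>t. w x * K m t x) t :> w x * Kt m t x"
      by (rule DERIV_cmult) (rule K_deriv_t[OF m Upos[OF \<open>t \<in> U\<close>]])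
    then show "((\<lambda>t. w x * K m t x) has_field_derivative w x * Kt m t x) (at t within U)"
      by (rule has_field_derivative_at_within)
  next
    fix t show "(\<lambda>x. w x * K m t x) integrable_on cbox a b"
      by (rule integrable_continuous) (intro continuous_intros continuous_on_subset[OF cw] continuous_on_subset[OF K_cont], auto)
  next
    have c1: "continuous_on (U \<times> cbox a b) (\<lambda>p. w (snd p))"
      by (rule continuous_on_compose2[OF cw continuous_on_snd]) auto
    have "continuous_on (U \<times> cbox a b) (\<lambda>p. w (snd p) * Kt m (fst p) (snd p))"
      unfolding Kt_def
    proof (intro continuous_intros c1)
      show "\<forall>p\<in>U \<times> cbox a b. fst p ^ (m + 2) \<noteq> 0" using Upos by auto
      show "\<forall>p\<in>U \<times> cbox a b. fst p ^ (m + 3) \<noteq> 0" using Upos by auto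
    qed
    then show "continuous_on (U \<times> cbox a b) (\<lambda>(t, x). w x * Kt m t x)"
      by (simp add: split_def)
  next
    show "t0 \<in> U" by (rule t0U)
    show "convex U" by (simp add: U_def convex_real_interval)
  qed
  then have L2: "((\<lambda>t. integral (cbox a b) (\<lambda>x. w x * K m t x)) has_field_derivative integral (cbox a b) (\<lambda>x. w x * Kt m t0 x)) (at t0)"
    using at_within_open[OF t0U openU] by simp
  have eq1: "integral (cbox a b) (\<lambda>x. w x * K m t x) = integral UNIV (\<lambda>x. w x * K m t x)" if "t \<in> U" for t
    unfolding box[symmetric]
    by (rule cs_integral[symmetric]) (auto intro!: continuous_intros cw K_cont K_supp[OF _ _ r0 rr[OF that]] simp: m1)
  have eq2: "integral (cbox a b) (\<lambda>x. w x * Kt m t0 x) = integral UNIV (\<lambda>x. w x * Kt m t0 x)"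
    unfolding box[symmetric]
    by (rule cs_integral[symmetric]) (auto intro!: continuous_intros cw Kt_cont Kt_supp[OF m _ r0 rr[OF t0U]])
  show ?thesis
    using has_field_derivative_transform_within_open[OF L2 openU t0U eq1] eq2 by simp
qed




lemma chain_step:
  assumes v: "Ck 2 v" and m: "m \<ge> 2" and t: "t > 0"
  shows "DERIV (\<lambda>t. integral UNIV (\<lambda>x. v x * K m t x)) t :>
           integral UNIV (\<lambda>x. laplacian v x * K (Suc m) t x) / (4 * (real m + 1))"
proof -
  have d: "DERIV (\<lambda>t. integral UNIV (\<lambda>x. v x * K m t x)) t :> integral UNIV (\<lambda>x. v x * Kt m t x)"
    by (rule deriv_int[OF Ck_cont[OF v] m t])
  have "(\<lambda>x. v x * Kt m t x) = (\<lambda>x. v x * LK (Suc m) t x / (4 * (real m + 1)))"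
  proof
    fix x
    have "LK (Suc m) t x = Kt m t x * (4 * (real m + 1))" using Kt_LK[OF m] t by simp
    then show "v x * Kt m t x = v x * LK (Suc m) t x / (4 * (real m + 1))" by simp
  qed
  then have "integral UNIV (\<lambda>x. v x * Kt m t x) = integral UNIV (\<lambda>x. v x * LK (Suc m) t x) / (4 * (real m + 1))"
    by simp
  also have "\<dots> = integral UNIV (\<lambda>x. laplacian v x * K (Suc m) t x) / (4 * (real m + 1))"
    using ibp_K[OF v _ t, of "Suc m"] m by simp
  finally show ?thesis using d by simp
qed

lemma inner_box4: "x \<in> box4 r \<Longrightarrow> x \<bullet> x \<le> 4 * r\<^sup>2"
proof -
  assume "x \<in> box4 r"
  then have "\<And>i. \<bar>x$i\<bar> \<le> r" by (simp add: mem_box4)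
  have "x$i * x$i \<le> r\<^sup>2" for i
  proof -
    have "x$i * x$i = \<bar>x$i\<bar> * \<bar>x$i\<bar>" by (simp add: abs_mult[symmetric])
    also have "\<dots> \<le> r * r" using \<open>\<And>i. \<bar>x$i\<bar> \<le> r\<close>[of i] by (intro mult_mono) auto
    finally show ?thesis by (simp add: power2_eq_square)
  qed
  then have "(\<Sum>i\<in>(UNIV::4 set). x$i * x$i) \<le> (\<Sum>i\<in>(UNIV::4 set). r\<^sup>2)" by (intro sum_mono)
  then show ?thesis by (simp add: inner_vec_def)
qed

lemma K_nonneg: "t > 0 \<Longrightarrow> K m t x \<ge> 0"
  by (simp add: K_def pp_nonneg)

lemma D_lower:
  fixes w :: "real^4 \<Rightarrow> real"
  assumes cw: "continuous_on UNIV w" and wpos: "\<And>x. w x > 0"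
  shows "\<exists>c>0. \<forall>t\<ge>1. integral UNIV (\<lambda>x. w x * K 5 t x) \<ge> c / t\<^sup>2"
proof -
  define B0 where "B0 = box4 (1/2)"
  have B0c: "B0 = cbox (-(\<chi> i. 1/2)) (\<chi> i. 1/2)" by (simp add: B0_def box4_def)
  have "compact B0" by (simp add: B0c)
  moreover have "0 \<in> B0" by (simp add: B0_def mem_box4)
  then have "B0 \<noteq> {}" by blast
  ultimately obtain x0 where x0: "x0 \<in> B0" "\<And>y. y \<in> B0 \<Longrightarrow> w x0 \<le> w y"
    using continuous_attains_inf[of B0 w] continuous_on_subset[OF cw] by blast
  define mu where "mu = w x0"
  have mu: "mu > 0" using wpos by (simp add: mu_def)
  have cB0: "measure lborel B0 = 1" using content_box4[of "1/2"] by (simp add: B0_def)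
  show ?thesis
  proof (intro exI[of _ mu] conjI allI impI mu)
    fix t :: real assume t: "t \<ge> 1"
    define f where "f x = w x * K 5 t x" for x
    define r where "r = t + 1"
    have r0: "r \<ge> 0" "2 * t \<le> r\<^sup>2" using t tsq[of t] by (simp_all add: r_def)
    have cf: "continuous_on UNIV f" unfolding f_def by (intro continuous_intros cw K_cont)
    have fz: "f x = 0" if "x \<notin> box4 r" for x unfolding f_def using K_supp[OF _ that r0] by simp
    have fpos: "f x \<ge> 0" for x unfolding f_def using wpos[of x] K_nonneg[of t 5 x] t by simp
    have sub: "B0 \<subseteq> box4 r" unfolding B0_def by (rule box4_mono) (simp add: r_def, use t in linarith)
    have intr: "f integrable_on box4 r" unfolding box4_def
      by (rule integrable_continuous) (rule continuous_on_subset[OF cf], simp)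
    have int0: "f integrable_on B0" unfolding B0c
      by (rule integrable_continuous) (rule continuous_on_subset[OF cf], simp)
    have low: "f x \<ge> mu / t\<^sup>2" if x: "x \<in> B0" for x
    proof -
      have xx: "x \<bullet> x \<le> 1" using inner_box4[of x "1/2"] x by (simp add: B0_def power2_eq_square)
      have a: "2 * t - x \<bullet> x \<ge> t" using xx t by simp
      have "pp 5 (2 * t - x \<bullet> x) = (2 * t - x \<bullet> x) ^ 5" using a t by (simp add: pp_def)
      also have "\<dots> \<ge> t ^ 5" using a t by (intro power_mono) auto
      finally have "pp 5 (2 * t - x \<bullet> x) \<ge> t ^ 5" .
      moreover have "(t::real) ^ (5 + 2) = t ^ 7" by simp
      ultimately have "K 5 t x \<ge> t ^ 5 / t ^ 7" unfolding K_def using t by (simp add: divide_right_mono)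
      moreover have "t ^ 5 / t ^ 7 = 1 / t\<^sup>2"
      proof -
        have "(t::real) ^ 7 = t ^ 5 * t\<^sup>2" by (simp add: power_add[symmetric])
        then show ?thesis using t by (simp add: field_simps)
      qed
      ultimately have Kl: "K 5 t x \<ge> 1 / t\<^sup>2" by simp
      have "mu / t\<^sup>2 = mu * (1 / t\<^sup>2)" by simp
      also have "\<dots> \<le> w x * K 5 t x" using x0(2)[OF x] Kl mu by (intro mult_mono) (auto simp: mu_def)
      finally show ?thesis by (simp add: f_def)
    qed
    have "mu / t\<^sup>2 = integral B0 (\<lambda>x. mu / t\<^sup>2)" using cB0 by (simp add: B0c)
    also have "\<dots> \<le> integral B0 f"
    proof (rule integral_le[OF _ int0])
      show "(\<lambda>x. mu / t\<^sup>2) integrable_on B0" unfolding B0c by (rule integrable_const)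
      show "\<And>x. x \<in> B0 \<Longrightarrow> mu / t\<^sup>2 \<le> f x" by (rule low)
    qed
    also have "\<dots> \<le> integral (box4 r) f"
      by (rule integral_subset_le[OF sub int0 intr]) (use fpos in blast)
    also have "\<dots> = integral UNIV f" using cs_integral[OF cf fz] by simp
    moreover have "f = (\<lambda>x. w x * K 5 t x)" by (rule ext) (simp add: f_def)
    ultimately show "mu / t\<^sup>2 \<le> integral UNIV (\<lambda>x. w x * K 5 t x)" by simp
  qed
qed

lemma A_upper:
  fixes u :: "real^4 \<Rightarrow> real"
  assumes cu: "continuous_on UNIV u" and upos: "\<And>x. u x > 0"
    and uo: "u \<in> o[at_infinity](\<lambda>x. norm x ^ 4)" and ep: "\<epsilon> > 0"
  shows "\<exists>M. \<forall>t\<ge>1. integral UNIV (\<lambda>x. u x * K 2 t x) \<le> \<epsilon> * t\<^sup>2 + M"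
proof -
  define e where "e = \<epsilon> / 1024"
  have e: "e > 0" using ep by (simp add: e_def)
  have "eventually (\<lambda>x. norm (u x) \<le> e * norm (norm x ^ 4)) at_infinity"
    by (rule landau_o.smallD[OF uo e])
  then obtain b where b: "\<And>x. b \<le> norm x \<Longrightarrow> norm (u x) \<le> e * norm (norm x ^ 4)"
    unfolding eventually_at_infinity by blast
  have "compact (u ` cball 0 b)" by (rule compact_continuous_image) (auto intro: continuous_on_subset[OF cu])
  then obtain M0 where M0: "\<And>y. y \<in> u ` cball 0 b \<Longrightarrow> norm y \<le> M0" using compact_imp_bounded bounded_iff by metis
  have ub: "u x \<le> e * (x \<bullet> x)\<^sup>2 + \<bar>M0\<bar>" for x
  proof (cases "b \<le> norm x")
    case True
    have "norm x ^ 4 = (x \<bullet> x)\<^sup>2"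
      by (simp add: power2_norm_eq_inner[symmetric] power_mult[symmetric])
    then show ?thesis using b[OF True] e by simp
  next
    case False
    then have "norm (u x) \<le> M0" using M0[of "u x"] by auto
    moreover have "e * (x \<bullet> x)\<^sup>2 \<ge> 0" using e by simp
    ultimately show ?thesis by simp
  qed
  show ?thesis
  proof (intro exI[of _ "256 * \<bar>M0\<bar>"] allI impI)
    fix t :: real assume t: "t \<ge> 1"
    define r where "r = sqrt (2 * t)"
    have r0: "r \<ge> 0" "r\<^sup>2 = 2 * t" using t by (simp_all add: r_def)
    define f where "f x = u x * K 2 t x" for x
    define B where "B = (e * (4 * t\<^sup>2) + \<bar>M0\<bar>) * (4 / t\<^sup>2)"
    have cf: "continuous_on UNIV f" unfolding f_def by (intro continuous_intros cu K_cont)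
    have fz: "f x = 0" if "x \<notin> box4 r" for x unfolding f_def using K_supp[OF _ that r0(1)] r0 by simp
    have B0: "B \<ge> 0" using e by (simp add: B_def)
    have fB: "\<bar>f x\<bar> \<le> B" for x
    proof (cases "2 * t - x \<bullet> x \<le> 0")
      case True
      then have "f x = 0" by (simp add: f_def K_def pp_neg)
      then show ?thesis using B0 by simp
    next
      case False
      then have xx: "x \<bullet> x < 2 * t" by simp
      have x0: "x \<bullet> x \<ge> 0" by simp
      have Kx: "K 2 t x = (2 * t - x \<bullet> x)\<^sup>2 / t ^ 4" using False by (simp add: K_def pp_def)
      have k0: "K 2 t x \<ge> 0" using K_nonneg[of t 2 x] t by simp
      have "(2 * t - x \<bullet> x)\<^sup>2 \<le> (2 * t)\<^sup>2" using xx x0 by (intro power_mono) auto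
      then have "K 2 t x \<le> (2 * t)\<^sup>2 / t ^ 4" unfolding Kx using t by (intro divide_right_mono) auto
      also have "(2 * t)\<^sup>2 / t ^ 4 = 4 / t\<^sup>2"
      proof -
        have "(t::real) ^ 4 = t\<^sup>2 * t\<^sup>2" by (simp add: power_add[symmetric])
        then show ?thesis using t by (simp add: field_simps power2_eq_square)
      qed
      finally have Kb: "K 2 t x \<le> 4 / t\<^sup>2" .
      have "(x \<bullet> x)\<^sup>2 \<le> (2 * t)\<^sup>2" using xx x0 by (intro power_mono) auto
      then have "e * (x \<bullet> x)\<^sup>2 \<le> e * (2 * t)\<^sup>2" using e by (intro mult_left_mono) auto
      moreover have "e * (2 * t)\<^sup>2 = e * (4 * t\<^sup>2)" by (simp add: power_mult_distrib)
      ultimately have ub2: "u x \<le> e * (4 * t\<^sup>2) + \<bar>M0\<bar>" using ub[of x] by linarith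
      have "\<bar>f x\<bar> = u x * K 2 t x" using upos[of x] k0 by (simp add: f_def)
      also have "\<dots> \<le> (e * (4 * t\<^sup>2) + \<bar>M0\<bar>) * (4 / t\<^sup>2)"
        using ub2 Kb upos[of x] k0 by (intro mult_mono) auto
      finally show ?thesis by (simp add: B_def)
    qed
    have "\<bar>integral UNIV f\<bar> \<le> B * (2 * r)^4" by (rule cs_bound[OF cf fz fB B0 r0(1)])
    also have "B * (2 * r)^4 = \<epsilon> * t\<^sup>2 + 256 * \<bar>M0\<bar>"
    proof -
      have "(2 * r)^4 = 16 * (r\<^sup>2)\<^sup>2" by (simp add: power_mult_distrib power_mult[symmetric])
      also have "\<dots> = 64 * t\<^sup>2" using r0(2) by (simp add: power2_eq_square)
      finally have r4: "(2 * r)^4 = 64 * t\<^sup>2" .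
      have h1: "4 / t\<^sup>2 * (64 * t\<^sup>2) = 256" using t by (simp add: field_simps)
      have "B * (64 * t\<^sup>2) = (e * (4 * t\<^sup>2) + \<bar>M0\<bar>) * (4 / t\<^sup>2 * (64 * t\<^sup>2))"
        unfolding B_def by (simp only: mult.assoc)
      also have "\<dots> = (e * (4 * t\<^sup>2) + \<bar>M0\<bar>) * 256" by (simp only: h1)
      also have "\<dots> = \<epsilon> * t\<^sup>2 + 256 * \<bar>M0\<bar>" by (simp add: e_def algebra_simps)
      finally show ?thesis unfolding r4 .
    qed
    finally have "integral UNIV f \<le> \<epsilon> * t\<^sup>2 + 256 * \<bar>M0\<bar>" by simp
    moreover have "f = (\<lambda>x. u x * K 2 t x)" by (rule ext) (simp add: f_def)
    ultimately show "integral UNIV (\<lambda>x. u x * K 2 t x) \<le> \<epsilon> * t\<^sup>2 + 256 * \<bar>M0\<bar>" by simp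
  qed
qed




lemma ode_contra:
  fixes A B C D :: "real \<Rightarrow> real" and c :: real
  assumes dA: "\<And>t. t > 0 \<Longrightarrow> DERIV A t :> B t"
    and dB: "\<And>t. t > 0 \<Longrightarrow> DERIV B t :> C t"
    and dC: "\<And>t. t > 0 \<Longrightarrow> DERIV C t :> D t"
    and c: "c > 0" and Dlow: "\<And>t. t \<ge> 1 \<Longrightarrow> D t \<ge> c / t\<^sup>2"
    and Apos: "\<And>t. t \<ge> 1 \<Longrightarrow> A t \<ge> 0"
    and Aup: "\<And>\<epsilon>. \<epsilon> > 0 \<Longrightarrow> \<exists>M. \<forall>t\<ge>1. A t \<le> \<epsilon> * t\<^sup>2 + M"
  shows False
proof -
  have Dpos: "D t \<ge> 0" if "t \<ge> 1" for t
    using Dlow[OF that] c by (smt (verit) divide_nonneg_nonneg zero_le_power2)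
  have C_nonpos: "C t1 \<le> 0" if t1: "t1 \<ge> 1" for t1
  proof (rule ccontr)
    assume "\<not> C t1 \<le> 0"
    define b where "b = C t1"
    have b: "b > 0" using \<open>\<not> C t1 \<le> 0\<close> by (simp add: b_def)
    have Cge: "C s \<ge> b" if "s \<ge> t1" for s
      unfolding b_def
    proof (rule DERIV_nonneg_imp_nondecreasing[OF that])
      fix x assume "t1 \<le> x" "x \<le> s"
      then have "DERIV C x :> D x" "D x \<ge> 0" using dC[of x] Dpos[of x] t1 by auto
      then show "\<exists>y. DERIV C x :> y \<and> y \<ge> 0" by blast
    qed
    define \<psi> where "\<psi> s = B s - B t1 - b * (s - t1)" for s
    have psi: "\<psi> s \<ge> 0" if "s \<ge> t1" for s
    proof -
      have "\<psi> t1 \<le> \<psi> s"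
      proof (rule DERIV_nonneg_imp_nondecreasing[OF that])
        fix x assume x: "t1 \<le> x" "x \<le> s"
        have "DERIV \<psi> x :> C x - 0 - b * (1 - 0)"
          unfolding \<psi>_def using x t1 by (auto intro!: derivative_eq_intros dB)
        then show "\<exists>y. DERIV \<psi> x :> y \<and> 0 \<le> y" using Cge[OF x(1)] by auto
      qed
      then show ?thesis by (simp add: \<psi>_def)
    qed
    define \<phi> where "\<phi> s = A s - A t1 - B t1 * (s - t1) - b * (s - t1)\<^sup>2 / 2" for s
    have phi: "\<phi> s \<ge> 0" if "s \<ge> t1" for s
    proof -
      have "\<phi> t1 \<le> \<phi> s"
      proof (rule DERIV_nonneg_imp_nondecreasing[OF that])
        fix x assume x: "t1 \<le> x" "x \<le> s"
        have "DERIV \<phi> x :> B x - 0 - B t1 * (1 - 0) - b * (2 * (x - t1) * (1 - 0)) / 2"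
          unfolding \<phi>_def using x t1 by (auto intro!: derivative_eq_intros dA)
        moreover have "B x - 0 - B t1 * (1 - 0) - b * (2 * (x - t1) * (1 - 0)) / 2 = \<psi> x"
          by (simp add: \<psi>_def)
        ultimately show "\<exists>y. DERIV \<phi> x :> y \<and> 0 \<le> y" using psi[OF x(1)] by auto
      qed
      then show ?thesis by (simp add: \<phi>_def)
    qed
    obtain M where M: "\<And>t. t \<ge> 1 \<Longrightarrow> A t \<le> b / 4 * t\<^sup>2 + M" using Aup[of "b/4"] b by auto
    define K where "K = \<bar>B t1\<bar> + \<bar>A t1\<bar> + \<bar>M\<bar> + 1"
    define s where "s = 4 * t1 + 32 * K / b + 1"
    have K: "K \<ge> 1" by (simp add: K_def)
    have s1: "s \<ge> 4 * t1" "s \<ge> 1" "s \<ge> 32 * K / b" using t1 b K by (simp_all add: s_def)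
    have st1: "s \<ge> t1" using s1 t1 by linarith
    have low: "A s \<ge> A t1 + B t1 * (s - t1) + b * (s - t1)\<^sup>2 / 2" using phi[OF st1] by (simp add: \<phi>_def)
    have up: "A s \<le> b / 4 * s\<^sup>2 + M" using M s1 by simp
    have q1: "(s - t1)\<^sup>2 \<ge> (3/4 * s)\<^sup>2" using s1 t1 by (intro power_mono) auto
    have q2: "B t1 * (s - t1) \<ge> - \<bar>B t1\<bar> * s"
    proof -
      have "\<bar>B t1 * (s - t1)\<bar> \<le> \<bar>B t1\<bar> * s" using st1 t1 by (simp add: abs_mult mult_left_mono)
      then show ?thesis by linarith
    qed
    have q3: "b * s / 32 \<ge> K" using s1(3) b by (simp add: field_simps)
    have q4: "b * s\<^sup>2 / 32 \<ge> K * s" using mult_right_mono[OF q3, of s] s1 by (simp add: power2_eq_square)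
    have q5: "K * s \<ge> \<bar>B t1\<bar> * s + \<bar>A t1\<bar> + \<bar>M\<bar> + 1"
    proof -
      have "(\<bar>A t1\<bar> + \<bar>M\<bar> + 1) * s \<ge> (\<bar>A t1\<bar> + \<bar>M\<bar> + 1) * 1"
        using s1(2) by (intro mult_left_mono) auto
      moreover have "K * s = \<bar>B t1\<bar> * s + (\<bar>A t1\<bar> + \<bar>M\<bar> + 1) * s" by (simp add: K_def algebra_simps)
      ultimately show ?thesis by simp
    qed
    have "b * (s - t1)\<^sup>2 / 2 \<ge> b * (3/4 * s)\<^sup>2 / 2" using q1 b by simp
    moreover have "b * (3/4 * s)\<^sup>2 / 2 = 9/32 * (b * s\<^sup>2)" by (simp add: power2_eq_square)
    ultimately have f1: "A s \<ge> A t1 + B t1 * (s - t1) + 9/32 * (b * s\<^sup>2)" using low by linarith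
    have f2: "A s \<le> 1/4 * (b * s\<^sup>2) + M" using up by simp
    have f3: "1/32 * (b * s\<^sup>2) \<ge> K * s" using q4 by simp
    have f4: "A t1 \<ge> - \<bar>A t1\<bar>" "M \<le> \<bar>M\<bar>" by auto
    show False using f1 f2 f3 f4 q2 q5 by linarith
  qed
  have C_neg: "C t \<le> - c / (2 * t)" if t: "t \<ge> 1" for t
  proof -
    define chi where "chi s = C s + c / s" for s
    have "chi t \<le> chi (2 * t)"
    proof (rule DERIV_nonneg_imp_nondecreasing[of t "2 * t" chi])
      show "t \<le> 2 * t" using t by simp
      fix x assume x: "t \<le> x" "x \<le> 2 * t"
      have "DERIV chi x :> D x + (- c / x\<^sup>2)"
        unfolding chi_def using x t by (auto intro!: derivative_eq_intros dC simp: power2_eq_square)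
      moreover have "D x - c / x\<^sup>2 \<ge> 0" using Dlow[of x] x t by simp
      ultimately show "\<exists>y. DERIV chi x :> y \<and> 0 \<le> y" by auto
    qed
    then have "C t + c / t \<le> C (2 * t) + c / (2 * t)" by (simp add: chi_def)
    moreover have "C (2 * t) \<le> 0" using C_nonpos[of "2 * t"] t by simp
    moreover have "c / t = c / (2 * t) + c / (2 * t)" using t by (simp add: field_simps)
    ultimately show ?thesis by linarith
  qed
  have B_up: "B t \<le> B 1 - c / 2 * ln t" if t: "t \<ge> 1" for t
  proof -
    define \<zeta> where "\<zeta> s = B s + c / 2 * ln s" for s
    have "\<zeta> t \<le> \<zeta> 1"
    proof (rule DERIV_nonpos_imp_nonincreasing[OF t])
      fix x assume x: "1 \<le> x" "x \<le> t"
      have "DERIV \<zeta> x :> C x + c / 2 * (1 / x)"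
        unfolding \<zeta>_def using x by (auto intro!: derivative_eq_intros dB)
      moreover have "C x + c / 2 * (1 / x) \<le> 0" using C_neg[OF x(1)] x by simp
      ultimately show "\<exists>y. DERIV \<zeta> x :> y \<and> y \<le> 0" by blast
    qed
    then show ?thesis by (simp add: \<zeta>_def)
  qed
  define T0 where "T0 = exp (2 * (\<bar>B 1\<bar> + 1) / c)"
  have T0: "T0 \<ge> 1" using c by (simp add: T0_def)
  have B_neg: "B s \<le> -1" if s: "s \<ge> T0" for s
  proof -
    have "ln s \<ge> ln T0" using s T0 by simp
    then have "ln s \<ge> 2 * (\<bar>B 1\<bar> + 1) / c" by (simp add: T0_def)
    then have "c / 2 * ln s \<ge> c / 2 * (2 * (\<bar>B 1\<bar> + 1) / c)" using c by (intro mult_left_mono) auto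
    then have "c / 2 * ln s \<ge> \<bar>B 1\<bar> + 1" using c by simp
    then show ?thesis using B_up[of s] s T0 by linarith
  qed
  define s where "s = A T0 + T0 + 1"
  have s: "s \<ge> T0" using Apos[OF T0] by (simp add: s_def)
  have "A s + s \<le> A T0 + T0"
  proof (rule DERIV_nonpos_imp_nonincreasing[OF s, of "\<lambda>x. A x + x", simplified])
    fix x assume x: "T0 \<le> x" "x \<le> s"
    have "DERIV (\<lambda>x. A x + x) x :> B x + 1" using x T0 by (auto intro!: derivative_eq_intros dA)
    then show "\<exists>y. DERIV (\<lambda>x. A x + x) x :> y \<and> y \<le> 0" using B_neg[OF x(1)] by auto
  qed
  then have "A s < 0" by (simp add: s_def)
  then show False using Apos[of s] s T0 by linarith
qed


lemma Ck_Suc_Suc_laplacian: "Ck (Suc (Suc k)) f \<Longrightarrow> Ck k (laplacian f)" by (rule Ck_laplacian)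

theorem mainTheorem6:
  fixes q :: real
  assumes "q \<ge> 2"
  shows "\<not> (\<exists>u :: real^4 \<Rightarrow> real.
            Ck 6 u \<and> (\<forall>x. u x > 0)
            \<and> (\<forall>x. laplacian (laplacian (laplacian u)) x = u x powr (- q))
            \<and> u \<in> o[at_infinity](\<lambda>x. norm x ^ 4))"
proof
  assume "\<exists>u :: real^4 \<Rightarrow> real.
            Ck 6 u \<and> (\<forall>x. u x > 0)
            \<and> (\<forall>x. laplacian (laplacian (laplacian u)) x = u x powr (- q))
            \<and> u \<in> o[at_infinity](\<lambda>x. norm x ^ 4)"
  then obtain u :: "real^4 \<Rightarrow> real" where C6: "Ck 6 u" and upos: "\<And>x. u x > 0"
    and eq: "\<And>x. laplacian (laplacian (laplacian u)) x = u x powr (- q)"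
    and uo: "u \<in> o[at_infinity](\<lambda>x. norm x ^ 4)" by blast
  define v1 where "v1 = laplacian u"
  define v2 where "v2 = laplacian v1"
  define v3 where "v3 = laplacian v2"
  have n6: "(6::nat) = Suc (Suc 4)" and n4: "(4::nat) = Suc (Suc 2)" and n2: "(2::nat) = Suc (Suc 0)" by simp_all
  have C6': "Ck (Suc (Suc 4)) u" using C6 unfolding n6 .
  have C4v1: "Ck 4 v1" unfolding v1_def by (rule Ck_laplacian[OF C6'])
  have C4v1': "Ck (Suc (Suc 2)) v1" using C4v1 unfolding n4 .
  have C2v2: "Ck 2 v2" unfolding v2_def by (rule Ck_laplacian[OF C4v1'])
  have C2v2': "Ck (Suc (Suc 0)) v2" using C2v2 unfolding n2 .
  have C0v3: "Ck 0 v3" unfolding v3_def by (rule Ck_laplacian[OF C2v2'])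
  have C2u: "Ck 2 u"
  proof -
    have "Ck 5 u" using Ck_Suc_mono[of 5 u] C6 by simp
    then have "Ck 4 u" using Ck_Suc_mono[of 4 u] by simp
    then have "Ck 3 u" using Ck_Suc_mono[of 3 u] by simp
    then show "Ck 2 u" using Ck_Suc_mono[of 2 u] by simp
  qed
  have C2v1: "Ck 2 v1"
  proof -
    have "Ck 3 v1" using Ck_Suc_mono[of 3 v1] C4v1 by simp
    then show "Ck 2 v1" using Ck_Suc_mono[of 2 v1] by simp
  qed
  have cu: "continuous_on UNIV u" by (rule Ck_cont[OF C2u])
  have cv3: "continuous_on UNIV v3" by (rule Ck_cont[OF C0v3])
  have v3eq: "v3 x = u x powr (- q)" for x using eq[of x] by (simp add: v1_def v2_def v3_def)
  have v3pos: "v3 x > 0" for x using upos[of x] by (simp add: v3eq)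
  define A where "A t = integral UNIV (\<lambda>x. u x * K 2 t x)" for t
  define B where "B t = integral UNIV (\<lambda>x. v1 x * K 3 t x) / 12" for t
  define C where "C t = integral UNIV (\<lambda>x. v2 x * K 4 t x) / 192" for t
  define D where "D t = integral UNIV (\<lambda>x. v3 x * K 5 t x) / 3840" for t
  have dA: "DERIV A t :> B t" if "t > 0" for t
  proof -
    have "DERIV A t :> integral UNIV (\<lambda>x. laplacian u x * K (Suc 2) t x) / (4 * (real 2 + 1))"
      unfolding A_def by (rule chain_step[OF C2u _ that]) simp
    then show ?thesis by (simp add: B_def v1_def numeral_3_eq_3)
  qed
  have dB: "DERIV B t :> C t" if "t > 0" for t
  proof -
    have "DERIV (\<lambda>t. integral UNIV (\<lambda>x. v1 x * K 3 t x)) t :> integral UNIV (\<lambda>x. laplacian v1 x * K (Suc 3) t x) / (4 * (real 3 + 1))"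
      by (rule chain_step[OF C2v1 _ that]) simp
    then have "DERIV B t :> integral UNIV (\<lambda>x. laplacian v1 x * K (Suc 3) t x) / (4 * (real 3 + 1)) / 12"
      unfolding B_def by (rule DERIV_cdivide)
    moreover have "Suc 3 = 4" by simp
    ultimately show ?thesis by (simp add: C_def v2_def)
  qed
  have dC: "DERIV C t :> D t" if "t > 0" for t
  proof -
    have "DERIV (\<lambda>t. integral UNIV (\<lambda>x. v2 x * K 4 t x)) t :> integral UNIV (\<lambda>x. laplacian v2 x * K (Suc 4) t x) / (4 * (real 4 + 1))"
      by (rule chain_step[OF C2v2 _ that]) simp
    then have "DERIV C t :> integral UNIV (\<lambda>x. laplacian v2 x * K (Suc 4) t x) / (4 * (real 4 + 1)) / 192"
      unfolding C_def by (rule DERIV_cdivide)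
    moreover have "Suc 4 = 5" by simp
    ultimately show ?thesis by (simp add: D_def v3_def)
  qed
  obtain c where c: "c > 0" and cl: "\<And>t. t \<ge> 1 \<Longrightarrow> integral UNIV (\<lambda>x. v3 x * K 5 t x) \<ge> c / t\<^sup>2"
    using D_lower[OF cv3 v3pos] by blast
  show False
  proof (rule ode_contra[OF dA dB dC])
    show "c / 3840 > 0" using c by simp
    fix t :: real assume t: "t \<ge> 1"
    show "D t \<ge> (c / 3840) / t\<^sup>2" using cl[OF t] by (simp add: D_def divide_right_mono)
  next
    fix t :: real assume t: "t \<ge> 1"
    have tt: "0 \<le> t" "0 \<le> t + 1" using t by simp_all
    show "A t \<ge> 0" unfolding A_def
    proof (rule integral_nonneg)
      show "(\<lambda>x. u x * K 2 t x) integrable_on UNIV"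
        by (rule cs_integrable[of _ "t + 1"]) (auto intro!: continuous_intros cu K_cont K_supp tsq simp: t tt)
      show "0 \<le> u x * K 2 t x" for x using upos[of x] K_nonneg[of t 2 x] t by simp
    qed
  next
    fix \<epsilon> :: real assume "\<epsilon> > 0"
    then show "\<exists>M. \<forall>t\<ge>1. A t \<le> \<epsilon> * t\<^sup>2 + M" unfolding A_def by (rule A_upper[OF cu upos uo])
  qed (simp_all)
qed


end
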